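(* Let $n\geq3$ and let $\sigma:\mathbb{R}\to\mathbb{R}$ be an increasing odd homeomorphism. Let $x=(x_1,\dots,x_n)\in\mathbb{R}^n$ and suppose there exist $i<j$ in $\{1,\dots,n\}$ such that $x_ix_j<0$ and $(x_i,x_j)$ is $\sigma$-irrational in $\mathbb{R}^2$. Then the orbit $\mathcal M(\sigma,n)x=\{m(x):m\in\mathcal M(\sigma,n)\}$ is dense in $\mathbb{R}^n$.
   Context: For $1\leq i<j\leq n$ define $h_{i,j},v_{i,j}:\mathbb{R}^n\to\mathbb{R}^n$ by $h_{i,j}(x)=x+\sigma^{-1}(x_j)e_i$ and $v_{i,j}(x)=x+\sigma(x_i)e_j$ (only the $i$-th, resp. $j$-th, coordinate changes), where $(e_k)$ is the standard basis. $\mathcal M(\sigma,n)$ is the monoid generated by all $h_{i,j},v_{i,j}$, $1\le i<j\le n$. In $\mathbb{R}^2$, with $h_\sigma(x,y)=(x+\sigma^{-1}(y),y)$, $v_\sigma(x,y)=(x,\sigma(x)+y)$, the $\sigma$-rational lines are: the axes $Ox=\mathbb{R}\times\{0\}$, $Oy=\{0\}\times\mathbb{R}$; the sets $m(Ox)$ with $m$ in the monoid generated by $h_\sigma,v_\sigma$; and the sets $m(Oy)$ with $m$ in the monoid generated by $h_\sigma^{-1},v_\sigma^{-1}$. A point of $\mathbb{R}^2$ is $\sigma$-irrational if it lies on no $\sigma$-rational line. *)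

theory Defs
  imports "HOL-Analysis.Analysis"
begin

inductive_set monoid_gen :: "('a \<Rightarrow> 'a) set \<Rightarrow> ('a \<Rightarrow> 'a) set"
  for G :: "('a \<Rightarrow> 'a) set" where
  id_mem: "id \<in> monoid_gen G"
| comp_mem: "g \<in> G \<Longrightarrow> m \<in> monoid_gen G \<Longrightarrow> g \<circ> m \<in> monoid_gen G"

definition hmap :: "(real \<Rightarrow> real) \<Rightarrow> 'n::{finite,linorder} \<Rightarrow> 'n::{finite,linorder} \<Rightarrow> real^'n::{finite,linorder} \<Rightarrow> real^'n::{finite,linorder}" where
  "hmap \<sigma> i j = (\<lambda>x. x + inv \<sigma> (x $ j) *\<^sub>R axis i 1)"

definition vmap :: "(real \<Rightarrow> real) \<Rightarrow> 'n::{finite,linorder} \<Rightarrow> 'n::{finite,linorder} \<Rightarrow> real^'n::{finite,linorder} \<Rightarrow> real^'n::{finite,linorder}" where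
  "vmap \<sigma> i j = (\<lambda>x. x + \<sigma> (x $ i) *\<^sub>R axis j 1)"

definition Msig :: "(real \<Rightarrow> real) \<Rightarrow> (real^'n::{finite,linorder} \<Rightarrow> real^'n::{finite,linorder}) set" where
  "Msig \<sigma> = monoid_gen ({hmap \<sigma> i j | i j. i < j} \<union> {vmap \<sigma> i j | i j. i < j})"

definition h_sig :: "(real \<Rightarrow> real) \<Rightarrow> real \<times> real \<Rightarrow> real \<times> real" where
  "h_sig \<sigma> = (\<lambda>(x, y). (x + inv \<sigma> y, y))"

definition v_sig :: "(real \<Rightarrow> real) \<Rightarrow> real \<times> real \<Rightarrow> real \<times> real" where
  "v_sig \<sigma> = (\<lambda>(x, y). (x, \<sigma> x + y))"

definition h_sig_inv :: "(real \<Rightarrow> real) \<Rightarrow> real \<times> real \<Rightarrow> real \<times> real" where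
  "h_sig_inv \<sigma> = (\<lambda>(x, y). (x - inv \<sigma> y, y))"

definition v_sig_inv :: "(real \<Rightarrow> real) \<Rightarrow> real \<times> real \<Rightarrow> real \<times> real" where
  "v_sig_inv \<sigma> = (\<lambda>(x, y). (x, y - \<sigma> x))"

definition Ox :: "(real \<times> real) set" where "Ox = UNIV \<times> {0}"
definition Oy :: "(real \<times> real) set" where "Oy = {0} \<times> UNIV"

definition rational_lines :: "(real \<Rightarrow> real) \<Rightarrow> (real \<times> real) set set" where
  "rational_lines \<sigma> = {Ox, Oy}
     \<union> {m ` Ox | m. m \<in> monoid_gen {h_sig \<sigma>, v_sig \<sigma>}}
     \<union> {m ` Oy | m. m \<in> monoid_gen {h_sig_inv \<sigma>, v_sig_inv \<sigma>}}"

definition sigma_irrational :: "(real \<Rightarrow> real) \<Rightarrow> real \<times> real \<Rightarrow> bool" where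
  "sigma_irrational \<sigma> p \<longleftrightarrow> (\<forall>L \<in> rational_lines \<sigma>. p \<notin> L)"

end

theory Submission
  imports Defs
begin


lemma monoid_gen_comp:
  assumes "m1 \<in> monoid_gen G" "m2 \<in> monoid_gen G" shows "m1 \<circ> m2 \<in> monoid_gen G"
  using assms(1)
proof induction
  case id_mem then show ?case using assms(2) by simp
next
  case (comp_mem g m)
  then have "g \<circ> (m \<circ> m2) \<in> monoid_gen G" using monoid_gen.comp_mem by blast
  then show ?case by (simp add: comp_assoc comp_def)
qed

lemma monoid_gen_gen: "g \<in> G \<Longrightarrow> g \<in> monoid_gen G"
  using monoid_gen.comp_mem[OF _ monoid_gen.id_mem] by fastforce

lemma monoid_gen_pow: "f \<in> monoid_gen G \<Longrightarrow> f ^^ N \<in> monoid_gen G"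
  by (induction N) (auto intro: monoid_gen.id_mem monoid_gen_comp)

locale sig =
  fixes \<sigma> :: "real \<Rightarrow> real"
  assumes smono: "strict_mono \<sigma>"
    and odd: "\<forall>t. \<sigma> (- t) = - \<sigma> t"
    and homeo: "\<exists>g. homeomorphism UNIV UNIV \<sigma> g"
begin

lemma bij: "bij \<sigma>"
  using homeo unfolding homeomorphism_def bij_def inj_def
  by (metis UNIV_I image_eqI surj_def)

lemma inv_sig[simp]: "inv \<sigma> (\<sigma> t) = t" by (simp add: inv_f_f bij_is_inj[OF bij])
lemma sig_inv[simp]: "\<sigma> (inv \<sigma> t) = t" by (simp add: surj_f_inv_f bij_is_surj[OF bij])

lemma cont: "continuous_on UNIV \<sigma>"
  using homeo unfolding homeomorphism_def by blast

lemma cont_inv: "continuous_on UNIV (inv \<sigma>)"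
proof -
  obtain g where g: "homeomorphism UNIV UNIV \<sigma> g" using homeo by blast
  have "g = inv \<sigma>"
  proof
    fix y have "\<sigma> (g y) = y" using g unfolding homeomorphism_def by auto
    then show "g y = inv \<sigma> y" by (metis inv_sig)
  qed
  then show ?thesis using g unfolding homeomorphism_def by blast
qed

lemma smono_inv: "strict_mono (inv \<sigma>)"
  unfolding strict_mono_def
  by (metis sig_inv smono strict_mono_less linorder_neqE_linordered_idom order_less_asym)

lemma sig0[simp]: "\<sigma> 0 = 0" using odd by (metis add.inverse_neutral neg_equal_zero)
lemma inv0[simp]: "inv \<sigma> 0 = 0" by (metis inv_sig sig0)
lemma odd_inv: "inv \<sigma> (- t) = - inv \<sigma> t" by (metis inv_sig odd sig_inv)

lemma sig_less[simp]: "\<sigma> a < \<sigma> b \<longleftrightarrow> a < b" using smono strict_mono_less by blast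
lemma sig_le[simp]: "\<sigma> a \<le> \<sigma> b \<longleftrightarrow> a \<le> b" using smono strict_mono_less_eq by blast
lemma inv_less[simp]: "inv \<sigma> a < inv \<sigma> b \<longleftrightarrow> a < b" using smono_inv strict_mono_less by blast
lemma inv_le[simp]: "inv \<sigma> a \<le> inv \<sigma> b \<longleftrightarrow> a \<le> b" using smono_inv strict_mono_less_eq by blast

end


definition phi :: "(real \<Rightarrow> real) \<Rightarrow> 'n::linorder \<Rightarrow> 'n \<Rightarrow> real \<Rightarrow> real" where
  "phi \<sigma> s t = (if s < t then \<sigma> else inv \<sigma>)"

definition E :: "(real \<Rightarrow> real) \<Rightarrow> 'n::{finite,linorder} \<Rightarrow> 'n::{finite,linorder} \<Rightarrow> real^'n::{finite,linorder} \<Rightarrow> real^'n::{finite,linorder}" where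
  "E \<sigma> s t = (if s < t then vmap \<sigma> s t else hmap \<sigma> t s)"

lemma E_nth: "s \<noteq> t \<Longrightarrow> E \<sigma> s t y $ l = (if l = t then y$t + phi \<sigma> s t (y$s) else y$l)"
  by (cases "s < t") (auto simp: E_def vmap_def hmap_def phi_def axis_def)

lemma E_Msig: assumes "s \<noteq> t" shows "E \<sigma> s t \<in> Msig \<sigma>"
proof (cases "s < t")
  case True then show ?thesis unfolding E_def Msig_def by (auto intro!: monoid_gen_gen)
next
  case False then have "t < s" using assms by auto
  then show ?thesis using False unfolding E_def Msig_def by (auto intro!: monoid_gen_gen)
qed

lemma E_pow_nth: "s \<noteq> t \<Longrightarrow> ((E \<sigma> s t)^^N) y $ l = (if l = t then y$t + real N * phi \<sigma> s t (y$s) else y$l)"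
  by (induction N arbitrary: l) (auto simp: E_nth algebra_simps)

lemma Msig_comp: "m1 \<in> Msig \<sigma> \<Longrightarrow> m2 \<in> Msig \<sigma> \<Longrightarrow> m1 \<circ> m2 \<in> Msig \<sigma>"
  unfolding Msig_def by (rule monoid_gen_comp)

lemma Msig_pow: "m \<in> Msig \<sigma> \<Longrightarrow> m ^^ N \<in> Msig \<sigma>"
  unfolding Msig_def by (rule monoid_gen_pow)

lemma Msig_id: "id \<in> Msig \<sigma>"
  unfolding Msig_def by (rule monoid_gen.id_mem)

definition orb :: "(real \<Rightarrow> real) \<Rightarrow> real^'n::{finite,linorder} \<Rightarrow> (real^'n::{finite,linorder}) set" where
  "orb \<sigma> x = (\<lambda>m. m x) ` Msig \<sigma>"

lemma orb_self: "x \<in> orb \<sigma> x" unfolding orb_def using Msig_id by (metis id_apply image_eqI)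

lemma orb_step: "y \<in> orb \<sigma> x \<Longrightarrow> m \<in> Msig \<sigma> \<Longrightarrow> m y \<in> orb \<sigma> x"
proof -
  assume "y \<in> orb \<sigma> x" "m \<in> Msig \<sigma>"
  then obtain m0 where "m0 \<in> Msig \<sigma>" "y = m0 x" unfolding orb_def by auto
  then have "m \<circ> m0 \<in> Msig \<sigma>" "m y = (m \<circ> m0) x" using Msig_comp \<open>m \<in> Msig \<sigma>\<close> by auto
  then show ?thesis unfolding orb_def by blast
qed

context sig begin

lemma phi_cont: "continuous_on UNIV (phi \<sigma> s t)"
  unfolding phi_def using cont cont_inv by auto

lemma phi_less[simp]: "phi \<sigma> s t a < phi \<sigma> s t b \<longleftrightarrow> a < b" unfolding phi_def by auto
lemma phi_le[simp]: "phi \<sigma> s t a \<le> phi \<sigma> s t b \<longleftrightarrow> a \<le> b" unfolding phi_def by auto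
lemma phi0[simp]: "phi \<sigma> s t 0 = 0" unfolding phi_def by auto
lemma phi_pos[simp]: "0 < phi \<sigma> s t a \<longleftrightarrow> 0 < a" using phi_less[of s t 0 a] by simp
lemma phi_neg[simp]: "phi \<sigma> s t a < 0 \<longleftrightarrow> a < 0" using phi_less[of s t a 0] by simp
lemma phi_odd: "phi \<sigma> s t (- a) = - phi \<sigma> s t a" unfolding phi_def using odd odd_inv by auto
lemma phi_surj: "\<exists>a. phi \<sigma> s t a = b"
proof (cases "s < t")
  case True then show ?thesis unfolding phi_def by (intro exI[of _ "inv \<sigma> b"]) simp
next
  case False then show ?thesis unfolding phi_def by (intro exI[of _ "\<sigma> b"]) simp
qed

lemma gen_cont:
  fixes g :: "real^'n::{finite,linorder} \<Rightarrow> real^'n::{finite,linorder}"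
  assumes "g \<in> {hmap \<sigma> i j | i j. i < j} \<union> {vmap \<sigma> i j | i j. i < j}"
  shows "continuous_on UNIV g"
proof -
  have c1: "continuous_on UNIV (\<lambda>x::real^'n::{finite,linorder}. inv \<sigma> (x $ j))" for j
    by (rule continuous_on_compose2[OF cont_inv]) (auto intro: continuous_intros)
  have c2: "continuous_on UNIV (\<lambda>x::real^'n::{finite,linorder}. \<sigma> (x $ j))" for j
    by (rule continuous_on_compose2[OF cont]) (auto intro: continuous_intros)
  show ?thesis using assms unfolding hmap_def vmap_def
    by (auto intro!: continuous_intros c1 c2)
qed

lemma Msig_cont:
  fixes m :: "real^'n::{finite,linorder} \<Rightarrow> real^'n::{finite,linorder}"
  shows "m \<in> Msig \<sigma> \<Longrightarrow> continuous_on UNIV m"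
  unfolding Msig_def
proof (induction rule: monoid_gen.induct)
  case id_mem then show ?case by (simp add: continuous_on_id)
next
  case (comp_mem g m)
  then show ?case using gen_cont[OF comp_mem(1)] continuous_on_compose[of UNIV m g]
    by (metis continuous_on_subset subset_UNIV)
qed

lemma closure_orb_step:
  assumes "y \<in> closure (orb \<sigma> x)" "m \<in> Msig \<sigma>" shows "m y \<in> closure (orb \<sigma> x)"
proof -
  have "m ` closure (orb \<sigma> x) \<subseteq> closure (orb \<sigma> x)"
    by (rule image_closure_subset) (use Msig_cont[OF assms(2)] orb_step[OF _ assms(2)] in
        \<open>auto intro: continuous_on_subset closure_subset[THEN subsetD]\<close>)
  then show ?thesis using assms(1) by blast
qed

lemma Msig_neg:
  fixes m :: "real^'n::{finite,linorder} \<Rightarrow> real^'n::{finite,linorder}"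
  shows "m \<in> Msig \<sigma> \<Longrightarrow> m (- y) = - m y"
  unfolding Msig_def
proof (induction arbitrary: y rule: monoid_gen.induct)
  case id_mem then show ?case by simp
next
  case (comp_mem g m)
  have g: "g (- z) = - g z" for z :: "real^'n::{finite,linorder}"
    using comp_mem(1) unfolding hmap_def vmap_def by (auto simp: odd odd_inv algebra_simps)
  show ?case using comp_mem g by simp
qed

end


lemma last_pos:
  fixes a d :: real assumes "a > 0" "d > 0"
  shows "\<exists>k::nat. a - real k * d > 0 \<and> a - real k * d \<le> d"
proof -
  define c where "c = ceiling (a / d)"
  have c1: "c \<ge> 1" using assms unfolding c_def by (simp add: order.strict_implies_order)
  define k where "k = nat (c - 1)"
  have kc: "real k = real_of_int c - 1" using c1 unfolding k_def by simp
  have "real_of_int c < a / d + 1" unfolding c_def by linarith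
  then have "real k < a / d" using kc by simp
  then have "real k * d < a" using assms by (simp add: field_simps)
  moreover have "a / d \<le> real_of_int c" unfolding c_def by simp
  then have "a \<le> (real k + 1) * d" using kc assms by (simp add: field_simps)
  ultimately show ?thesis by (intro exI[of _ k]) (auto simp: algebra_simps)
qed

lemma monoid_gen_rcomp: "m \<in> monoid_gen G \<Longrightarrow> g \<in> G \<Longrightarrow> m \<circ> g \<in> monoid_gen G"
  by (rule monoid_gen_comp) (auto intro: monoid_gen_gen)

lemma planar_inverse:
  assumes "m \<in> monoid_gen {h_sig \<sigma>, v_sig \<sigma>}"
  shows "\<exists>m'\<in>monoid_gen {h_sig_inv \<sigma>, v_sig_inv \<sigma>}. \<forall>q. m' (m q) = q"
  using assms
proof induction
  case id_mem then show ?case by (intro bexI[of _ id]) (auto intro: monoid_gen.id_mem)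
next
  case (comp_mem g m)
  then obtain m' where m': "m' \<in> monoid_gen {h_sig_inv \<sigma>, v_sig_inv \<sigma>}" "\<forall>q. m' (m q) = q" by blast
  from comp_mem(1) obtain g' where g': "g' \<in> {h_sig_inv \<sigma>, v_sig_inv \<sigma>}" "\<forall>q. g' (g q) = q"
  proof
    assume "g = h_sig \<sigma>" then show ?thesis
      by (intro that[of "h_sig_inv \<sigma>"]) (auto simp: h_sig_def h_sig_inv_def)
  next
    assume "g \<in> {v_sig \<sigma>}" then show ?thesis
      by (intro that[of "v_sig_inv \<sigma>"]) (auto simp: v_sig_def v_sig_inv_def)
  qed
  show ?case
  proof (intro bexI[of _ "m' \<circ> g'"])
    show "\<forall>q. (m' \<circ> g') ((g \<circ> m) q) = q" using m'(2) g'(2) by (metis comp_apply)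
    show "m' \<circ> g' \<in> monoid_gen {h_sig_inv \<sigma>, v_sig_inv \<sigma>}" by (rule monoid_gen_rcomp[OF m'(1) g'(1)])
  qed
qed

definition Rpl :: "(real \<Rightarrow> real) \<Rightarrow> real \<times> real \<Rightarrow> (real \<times> real) set" where
  "Rpl \<sigma> p0 = (\<lambda>m. m p0) ` monoid_gen {h_sig \<sigma>, v_sig \<sigma>}"

lemma irr_avoid:
  assumes "sigma_irrational \<sigma> p0" "p \<in> Rpl \<sigma> p0" shows "fst p \<noteq> 0"
proof
  assume f: "fst p = 0"
  obtain m where m: "m \<in> monoid_gen {h_sig \<sigma>, v_sig \<sigma>}" "p = m p0" using assms(2) unfolding Rpl_def by auto
  obtain m' where m': "m' \<in> monoid_gen {h_sig_inv \<sigma>, v_sig_inv \<sigma>}" "\<forall>q. m' (m q) = q"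
    using planar_inverse[OF m(1)] by blast
  have "p \<in> Oy" using f unfolding Oy_def by (cases p) auto
  then have "p0 \<in> m' ` Oy" using m m' by (metis image_eqI)
  moreover have "m' ` Oy \<in> rational_lines \<sigma>" using m' unfolding rational_lines_def by blast
  ultimately show False using assms(1) unfolding sigma_irrational_def by blast
qed

lemma Rpl_self: "p0 \<in> Rpl \<sigma> p0" unfolding Rpl_def by (metis id_apply image_eqI monoid_gen.id_mem)

lemma Rpl_step: "p \<in> Rpl \<sigma> p0 \<Longrightarrow> g \<in> {h_sig \<sigma>, v_sig \<sigma>} \<Longrightarrow> g p \<in> Rpl \<sigma> p0"
  unfolding Rpl_def
proof -
  assume "p \<in> (\<lambda>m. m p0) ` monoid_gen {h_sig \<sigma>, v_sig \<sigma>}" "g \<in> {h_sig \<sigma>, v_sig \<sigma>}"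
  then obtain m where "m \<in> monoid_gen {h_sig \<sigma>, v_sig \<sigma>}" "p = m p0" by auto
  then have "g \<circ> m \<in> monoid_gen {h_sig \<sigma>, v_sig \<sigma>}" "g p = (g \<circ> m) p0"
    using monoid_gen.comp_mem[of g "{h_sig \<sigma>, v_sig \<sigma>}" m] \<open>g \<in> _\<close> by auto
  then show "g p \<in> (\<lambda>m. m p0) ` monoid_gen {h_sig \<sigma>, v_sig \<sigma>}" by blast
qed

lemma Rpl_pow: "p \<in> Rpl \<sigma> p0 \<Longrightarrow> g \<in> {h_sig \<sigma>, v_sig \<sigma>} \<Longrightarrow> (g ^^ k) p \<in> Rpl \<sigma> p0"
  by (induction k) (auto intro: Rpl_step)

lemma h_pow: "(h_sig \<sigma> ^^ k) (a, b) = (a + real k * inv \<sigma> b, b)"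
  by (induction k) (auto simp: h_sig_def algebra_simps)

lemma v_pow: "(v_sig \<sigma> ^^ k) (a, b) = (a, b + real k * \<sigma> a)"
  by (induction k) (auto simp: v_sig_def algebra_simps)

context sig begin

lemma euclid:
  assumes avoid: "\<forall>p\<in>Rpl \<sigma> p0. fst p \<noteq> 0" and p0: "fst p0 > 0" "snd p0 < 0" and e: "\<epsilon> > 0"
  shows "\<exists>p\<in>Rpl \<sigma> p0. 0 < fst p \<and> fst p < \<epsilon> \<and> snd p < 0 \<and> - snd p < \<epsilon>"
proof -
  define T where "T = {p \<in> Rpl \<sigma> p0. fst p > 0 \<and> snd p < 0}"
  define S where "S = (\<lambda>p. fst p - snd p) ` T"
  have p0T: "p0 \<in> T" using p0 Rpl_self unfolding T_def by blast
  have Sne: "S \<noteq> {}" using p0T unfolding S_def by blast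
  have Sbdd: "bdd_below S" unfolding S_def T_def by (rule bdd_belowI[of _ 0]) auto
  define \<eta> where "\<eta> = min \<epsilon> (min (inv \<sigma> \<epsilon>) (\<sigma> \<epsilon>))"
  have eta: "\<eta> > 0" using e unfolding \<eta>_def using inv_less[of 0 \<epsilon>] sig_less[of 0 \<epsilon>] by simp
  have "Inf S < Inf S + \<eta>" using eta by simp
  then obtain z where "z \<in> S" "z < Inf S + \<eta>" using cInf_less_iff[OF Sne Sbdd] by blast
  then obtain p where pT: "p \<in> T" and ps: "fst p - snd p < Inf S + \<eta>"
    unfolding S_def by blast
  have lowS: "Inf S \<le> fst q - snd q" if "q \<in> T" for q
    using cInf_lower[OF _ Sbdd] that unfolding S_def by blast
  obtain a b where ab: "p = (a, b)" by (cases p)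
  have a: "a > 0" and b: "b < 0" and pR: "p \<in> Rpl \<sigma> p0" using pT ab unfolding T_def by auto
  have ib: "inv \<sigma> b < 0" using b inv_less[of b 0] by simp
  show ?thesis
  proof (cases "a + inv \<sigma> b > 0")
    case True
    have hp: "h_sig \<sigma> p = (a + inv \<sigma> b, b)" by (simp add: ab h_sig_def)
    have "h_sig \<sigma> p \<in> Rpl \<sigma> p0" by (rule Rpl_step[OF pR]) simp
    then have "h_sig \<sigma> p \<in> T" using True b hp unfolding T_def by auto
    then have "Inf S \<le> a + inv \<sigma> b - b" using lowS ab by (auto simp: h_sig_def)
    then have d\<eta>: "- inv \<sigma> b < \<eta>" using ps ab by simp
    obtain k :: nat where k: "a - real k * (- inv \<sigma> b) > 0" "a - real k * (- inv \<sigma> b) \<le> - inv \<sigma> b"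
      using last_pos[OF a, of "- inv \<sigma> b"] ib by auto
    define q where "q = (h_sig \<sigma> ^^ k) p"
    have q: "q = (a + real k * inv \<sigma> b, b)" unfolding q_def ab h_pow by simp
    have "q \<in> Rpl \<sigma> p0" unfolding q_def by (rule Rpl_pow[OF pR]) simp
    moreover have "- inv \<sigma> b < inv \<sigma> \<epsilon>" using d\<eta> unfolding \<eta>_def by linarith
    then have "inv \<sigma> (- b) < inv \<sigma> \<epsilon>" by (simp add: odd_inv)
    then have "- b < \<epsilon>" by simp
    moreover have "- inv \<sigma> b < \<epsilon>" using d\<eta> unfolding \<eta>_def by linarith
    ultimately show ?thesis using k q b by (intro bexI[of _ q]) (auto simp: algebra_simps)
  next
    case False
    have "fst (h_sig \<sigma> p) \<noteq> 0" using avoid Rpl_step[OF pR] by auto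
    then have "a + inv \<sigma> b < 0" using False ab by (auto simp: h_sig_def)
    then have "inv \<sigma> b < inv \<sigma> (\<sigma> (- a))" by simp
    then have "b < - \<sigma> a" using odd by simp
    then have bs: "b + \<sigma> a < 0" by simp
    have sa: "\<sigma> a > 0" using a sig_less[of 0 a] by simp
    have vp: "v_sig \<sigma> p = (a, b + \<sigma> a)" by (simp add: ab v_sig_def)
    have "v_sig \<sigma> p \<in> Rpl \<sigma> p0" by (rule Rpl_step[OF pR]) simp
    then have "v_sig \<sigma> p \<in> T" using bs a vp unfolding T_def by (auto simp: add.commute)
    then have "Inf S \<le> a - (\<sigma> a + b)" using lowS ab by (auto simp: v_sig_def)
    then have d\<eta>: "\<sigma> a < \<eta>" using ps ab by simp
    obtain k :: nat where k: "- b - real k * \<sigma> a > 0" "- b - real k * \<sigma> a \<le> \<sigma> a"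
      using last_pos[of "- b" "\<sigma> a"] b sa by auto
    define q where "q = (v_sig \<sigma> ^^ k) p"
    have q: "q = (a, b + real k * \<sigma> a)" unfolding q_def ab v_pow by simp
    have "q \<in> Rpl \<sigma> p0" unfolding q_def by (rule Rpl_pow[OF pR]) simp
    moreover have "\<sigma> a < \<sigma> \<epsilon>" using d\<eta> unfolding \<eta>_def by linarith
    then have "a < \<epsilon>" by simp
    moreover have "\<sigma> a < \<epsilon>" using d\<eta> unfolding \<eta>_def by linarith
    ultimately show ?thesis using k q a by (intro bexI[of _ q]) (auto simp: algebra_simps)
  qed
qed

end


lemma E_ji: "i < j \<Longrightarrow> E \<sigma> j i = hmap \<sigma> i j" unfolding E_def by auto
lemma E_ij: "i < j \<Longrightarrow> E \<sigma> i j = vmap \<sigma> i j" unfolding E_def by auto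

lemma lift:
  fixes x :: "real^'n::{finite,linorder}"
  assumes ij: "i < j" and m: "m \<in> monoid_gen {h_sig \<sigma>, v_sig \<sigma>}"
  shows "\<exists>M\<in>Msig \<sigma>. \<forall>l. M x $ l = (if l = i then fst (m (x$i, x$j)) else if l = j then snd (m (x$i, x$j)) else x$l)"
  using m
proof induction
  case id_mem then show ?case by (intro bexI[OF _ Msig_id]) auto
next
  case (comp_mem g m)
  then obtain M where M: "M \<in> Msig \<sigma>" "\<forall>l. M x $ l = (if l = i then fst (m (x$i, x$j)) else if l = j then snd (m (x$i, x$j)) else x$l)" by blast
  have ne: "i \<noteq> j" "j \<noteq> i" using ij by auto
  from comp_mem(1) show ?case
  proof
    assume g: "g = h_sig \<sigma>"
    show ?thesis
    proof (intro bexI[of _ "E \<sigma> j i \<circ> M"])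
      show "E \<sigma> j i \<circ> M \<in> Msig \<sigma>" using M(1) E_Msig[OF ne(2)] Msig_comp by blast
      show "\<forall>l. (E \<sigma> j i \<circ> M) x $ l = (if l = i then fst ((g \<circ> m) (x$i, x$j)) else if l = j then snd ((g \<circ> m) (x$i, x$j)) else x$l)"
        using M(2) ne ij g by (auto simp: E_nth phi_def h_sig_def split: prod.splits)
    qed
  next
    assume g: "g \<in> {v_sig \<sigma>}"
    show ?thesis
    proof (intro bexI[of _ "E \<sigma> i j \<circ> M"])
      show "E \<sigma> i j \<circ> M \<in> Msig \<sigma>" using M(1) E_Msig[OF ne(1)] Msig_comp by blast
      show "\<forall>l. (E \<sigma> i j \<circ> M) x $ l = (if l = i then fst ((g \<circ> m) (x$i, x$j)) else if l = j then snd ((g \<circ> m) (x$i, x$j)) else x$l)"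
        using M(2) ne ij g by (auto simp: E_nth phi_def v_sig_def split: prod.splits)
    qed
  qed
qed

lemma NK:
  fixes u1 u2 v Y :: real
  assumes "0 < u1" "u1 < u2" "v < 0"
  shows "\<exists>N::nat. \<exists>K::nat. N > 0 \<and> u1 * N < Y - K * v \<and> Y - K * v < u2 * N"
proof -
  define r where "r = 1 / u1 - 1 / u2"
  have r: "r > 0" using assms unfolding r_def by (simp add: frac_less2)
  obtain K :: nat where K: "real K > (max 0 (1 / r - Y) + 1) / (- v)"
    using reals_Archimedean2 by blast
  define T where "T = Y - K * v"
  have h: "real K * (- v) > max 0 (1 / r - Y) + 1" using K assms(3) by (simp add: field_simps)
  have m1: "max 0 (1 / r - Y) \<ge> 1 / r - Y" by (rule max.cobounded2)
  have m2: "1 / r > 0" using r by simp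
  have T1: "T > 1 / r" unfolding T_def using h m1 by (simp add: algebra_simps)
  have T0: "T > 0" using T1 m2 by linarith
  have Tr: "T * r > 1" using r T1 by (simp add: field_simps)
  define N where "N = nat (ceiling (T / u1) - 1)"
  have Tu1: "T / u1 > 0" using T0 assms by simp
  have "ceiling (T / u1) \<ge> 1" using Tu1 by (simp add: order.strict_implies_order)
  then have NN: "real N = real_of_int (ceiling (T / u1)) - 1" unfolding N_def by simp
  have "real N < T / u1" using NN by linarith
  then have a1: "u1 * N < T" using assms by (simp add: field_simps)
  have "real N \<ge> T / u1 - 1" using NN by linarith
  moreover have "T / u1 - 1 > T / u2" using Tr unfolding r_def by (simp add: algebra_simps)
  ultimately have b: "real N > T / u2" by linarith
  then have a2: "T < u2 * N" using assms by (simp add: field_simps)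
  have "real N > 0" using b T0 assms by (smt (verit) divide_pos_pos)
  then show ?thesis using a1 a2 unfolding T_def by (intro exI[of _ N] exI[of _ K]) auto
qed

context sig begin

lemma adjust:
  fixes x y :: "real^'n::{finite,linorder}"
  assumes y: "y \<in> orb \<sigma> x" and st: "s \<noteq> t" and ys: "y$s \<noteq> 0" and dir: "(g - y$t) * y$s \<ge> 0"
  shows "\<exists>z\<in>orb \<sigma> x. (\<forall>l. l \<noteq> t \<longrightarrow> z$l = y$l) \<and> \<bar>z$t - g\<bar> \<le> \<bar>phi \<sigma> s t (y$s)\<bar>"
proof -
  define d where "d = phi \<sigma> s t (y$s)"
  have d0: "d \<noteq> 0" using ys unfolding d_def by (metis phi0 phi_less linorder_neqE_linordered_idom order_less_irrefl)
  have sgn: "(g - y$t) / d \<ge> 0"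
  proof (cases "y$s > 0")
    case True then have "d > 0" unfolding d_def by simp
    moreover have "g - y$t \<ge> 0" using dir True by (simp add: zero_le_mult_iff)
    ultimately show ?thesis by simp
  next
    case False then have "y$s < 0" using ys by simp
    then have "d < 0" unfolding d_def by simp
    moreover have "g - y$t \<le> 0" using dir \<open>y$s < 0\<close> by (simp add: zero_le_mult_iff)
    ultimately show ?thesis by (simp add: divide_nonpos_neg)
  qed
  define r where "r = (g - y$t) / d"
  define N where "N = nat (floor r)"
  have NN: "real N = of_int (floor r)" using sgn unfolding N_def r_def by simp
  have N1: "real N \<le> r" "r < real N + 1" using NN by linarith+
  define z where "z = ((E \<sigma> s t)^^N) y"
  have zo: "z \<in> orb \<sigma> x" unfolding z_def by (rule orb_step[OF y Msig_pow[OF E_Msig[OF st]]])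
  have zt: "z$t = y$t + real N * d" unfolding z_def d_def using E_pow_nth[OF st] by simp
  have "g - z$t = (r - real N) * d" unfolding zt r_def using d0 by (simp add: field_simps)
  then have "\<bar>z$t - g\<bar> = (r - real N) * \<bar>d\<bar>" using N1 by (simp add: abs_mult abs_minus_commute)
  also have "\<dots> \<le> 1 * \<bar>d\<bar>" using N1 by (intro mult_right_mono) auto
  finally show ?thesis using zo unfolding z_def d_def using E_pow_nth[OF st]
    by (intro bexI[of _ "((E \<sigma> s t)^^N) y"]) auto
qed

lemma small_phi:
  assumes "\<tau> > 0" "\<bar>w\<bar> < min (\<sigma> \<tau>) (inv \<sigma> \<tau>)"
  shows "\<bar>phi \<sigma> s t w\<bar> < \<tau>"
proof -
  have a: "\<bar>\<sigma> w\<bar> < \<tau>"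
  proof (cases "w \<ge> 0")
    case True then have "\<sigma> w \<ge> 0" using sig_le[of 0 w] by simp
    moreover have "w < inv \<sigma> \<tau>" using assms True by simp
    then have "\<sigma> w < \<tau>" using sig_less[of w "inv \<sigma> \<tau>"] by simp
    ultimately show ?thesis by simp
  next
    case False then have "\<sigma> w < 0" using sig_less[of w 0] by simp
    moreover have "- w < inv \<sigma> \<tau>" using assms False by simp
    then have "\<sigma> (- w) < \<tau>" using sig_less[of "- w" "inv \<sigma> \<tau>"] by simp
    ultimately show ?thesis by (simp add: odd)
  qed
  have b: "\<bar>inv \<sigma> w\<bar> < \<tau>"
  proof (cases "w \<ge> 0")
    case True then have "inv \<sigma> w \<ge> 0" using inv_le[of 0 w] by simp
    moreover have "w < \<sigma> \<tau>" using assms True by simp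
    then have "inv \<sigma> w < \<tau>" using inv_less[of w "\<sigma> \<tau>"] by simp
    ultimately show ?thesis by simp
  next
    case False then have "inv \<sigma> w < 0" using inv_less[of w 0] by simp
    moreover have "- w < \<sigma> \<tau>" using assms False by simp
    then have "inv \<sigma> (- w) < \<tau>" using inv_less[of "- w" "\<sigma> \<tau>"] by simp
    ultimately show ?thesis by (simp add: odd_inv)
  qed
  show ?thesis using a b unfolding phi_def by auto
qed

lemma multi_adjust:
  fixes x y :: "real^'n::{finite,linorder}"
  assumes y: "y \<in> orb \<sigma> x" and ij: "i \<noteq> j" and yi: "y$i > 0" and yj: "y$j < 0"
    and B: "\<forall>t. \<bar>phi \<sigma> i t (y$i)\<bar> \<le> B \<and> \<bar>phi \<sigma> j t (y$j)\<bar> \<le> B"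
    and L: "i \<notin> L" "j \<notin> L"
  shows "\<exists>z\<in>orb \<sigma> x. (\<forall>l. l \<notin> L \<longrightarrow> z$l = y$l) \<and> (\<forall>l\<in>L. \<bar>z$l - g l\<bar> \<le> B)"
proof -
  have "finite L" by simp
  then show ?thesis using L
  proof (induction L rule: finite_induct)
    case empty then show ?case using y by auto
  next
    case (insert t L)
    then obtain z where z: "z \<in> orb \<sigma> x" "\<forall>l. l \<notin> L \<longrightarrow> z$l = y$l" "\<forall>l\<in>L. \<bar>z$l - g l\<bar> \<le> B" by auto
    have ti: "t \<noteq> i" "t \<noteq> j" using insert by auto
    have zi: "z$i = y$i" "z$j = y$j" using z(2) insert by auto
    obtain s where s: "s = i \<or> s = j" "(g t - z$t) * z$s \<ge> 0" "z$s \<noteq> 0"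
    proof (cases "g t - z$t \<ge> 0")
      case True then show ?thesis using that[of i] zi yi by simp
    next
      case False then show ?thesis using that[of j] zi yj by (simp add: mult_nonpos_nonpos)
    qed
    have st: "s \<noteq> t" using s ti by auto
    obtain w where w: "w \<in> orb \<sigma> x" "\<forall>l. l \<noteq> t \<longrightarrow> w$l = z$l" "\<bar>w$t - g t\<bar> \<le> \<bar>phi \<sigma> s t (z$s)\<bar>"
      using adjust[OF z(1) st s(3) s(2)] by blast
    have "\<bar>phi \<sigma> s t (z$s)\<bar> \<le> B" using B s(1) zi by auto
    then show ?case using w z insert.hyps by (intro bexI[of _ w]) auto
  qed
qed

end


context sig begin

lemma cont_at:
  fixes f :: "real \<Rightarrow> real"
  assumes "continuous_on UNIV f" "e > 0"
  shows "\<exists>d>0. \<forall>c. \<bar>c - c0\<bar> < d \<longrightarrow> \<bar>f c - f c0\<bar> < (e::real)"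
proof -
  have "\<forall>x\<in>UNIV. \<forall>e>0. \<exists>d>0. \<forall>x'\<in>UNIV. dist x' x < d \<longrightarrow> dist (f x') (f x) < e"
    using assms(1) by (simp add: continuous_on_iff)
  then obtain d where "d > 0" "\<forall>x'. dist x' c0 < d \<longrightarrow> dist (f x') (f c0) < e" using assms(2) by blast
  then show ?thesis by (auto simp: dist_real_def)
qed

lemma W_lemma:
  fixes x y :: "real^'n::{finite,linorder}"
  assumes ij: "i < j" and ki: "k \<noteq> i" and kj: "k \<noteq> j"
    and xi: "x$i > 0" and xj: "x$j < 0"
    and avoid: "\<forall>p\<in>Rpl \<sigma> (x$i, x$j). fst p \<noteq> 0"
    and yi: "y$i < 0" and yk: "y$k > 0"
  shows "y \<in> closure (orb \<sigma> x)"
  unfolding closure_approachable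
proof (intro allI impI)
  fix \<epsilon> :: real assume \<epsilon>: "\<epsilon> > 0"
  define e where "e = \<epsilon> / real CARD('n)"
  have e: "e > 0" using \<epsilon> unfolding e_def by simp
  define c_lo where "c_lo = max (y$k / 2) (y$k - e / 2)"
  define c_hi where "c_hi = y$k + e / 2"
  have cb1: "c_lo \<ge> y$k - e / 2" unfolding c_lo_def by (rule max.cobounded2)
  have cb2: "c_lo \<ge> y$k / 2" unfolding c_lo_def by (rule max.cobounded1)
  have cb3: "c_lo = y$k / 2 \<or> c_lo = y$k - e / 2" unfolding c_lo_def by linarith
  have clo: "0 < c_lo" "c_lo < y$k" "y$k - c_lo \<le> e / 2" using yk e cb1 cb2 cb3 by linarith+
  have chi: "y$k < c_hi" "c_hi - y$k = e / 2" using e unfolding c_hi_def by auto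
  define u1 where "u1 = phi \<sigma> k j c_lo"
  define u2 where "u2 = phi \<sigma> k j c_hi"
  have u: "0 < u1" "u1 < u2" unfolding u1_def u2_def using clo chi by auto
  define v where "v = \<sigma> (y$i)"
  have v: "v < 0" unfolding v_def using yi sig_less[of "y$i" 0] by simp
  obtain N K :: nat where NK: "N > 0" "u1 * N < y$j - K * v" "y$j - K * v < u2 * N"
    using NK[OF u v, of "y$j"] by (elim exE conjE) (rule that, auto)
  define w where "w = (y$j - K * v) / N"
  have Npos: "real N > 0" using NK(1) by simp
  have w1: "u1 < w" unfolding w_def using NK(2) Npos by (simp add: pos_less_divide_eq)
  have w2: "w < u2" unfolding w_def using NK(3) Npos by (simp add: pos_divide_less_eq)
  note w = w1 w2
  obtain cs where cs: "phi \<sigma> k j cs = w" using phi_surj by blast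
  have "phi \<sigma> k j c_lo < phi \<sigma> k j cs" using w(1) cs unfolding u1_def by simp
  then have csb1: "c_lo < cs" by (simp only: phi_less)
  have "phi \<sigma> k j cs < phi \<sigma> k j c_hi" using w(2) cs unfolding u2_def by simp
  then have csb2: "cs < c_hi" by (simp only: phi_less)
  have cs_close: "\<bar>cs - y$k\<bar> < e / 2" using csb1 csb2 clo chi by linarith
  have "real N * w = y$j - K * v" unfolding w_def using Npos by simp
  then have ident: "real N * phi \<sigma> k j cs + real K * v = y$j" using cs by simp
  obtain \<tau>1 where t1: "\<tau>1 > 0" "\<forall>c. \<bar>c - cs\<bar> < \<tau>1 \<longrightarrow> \<bar>phi \<sigma> k j c - phi \<sigma> k j cs\<bar> < e / (3 * N)"
    using cont_at[OF phi_cont[of k j], of "e / (3 * N)" cs] e Npos by auto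
  obtain \<tau>2 where t2: "\<tau>2 > 0" "\<forall>a. \<bar>a - y$i\<bar> < \<tau>2 \<longrightarrow> \<bar>\<sigma> a - \<sigma> (y$i)\<bar> < e / (3 * (K + 1))"
    using cont_at[OF cont, of "e / (3 * (K + 1))" "y$i"] e by (auto simp: add_pos_nonneg)
  define \<tau> where "\<tau> = min (min \<tau>1 \<tau>2) (e / 2)"
  have \<tau>: "\<tau> > 0" "\<tau> \<le> \<tau>1" "\<tau> \<le> \<tau>2" "\<tau> \<le> e / 2" unfolding \<tau>_def using t1 t2 e by auto
  define \<delta> where "\<delta> = min (min (\<sigma> (\<tau>/2)) (inv \<sigma> (\<tau>/2))) (e / 3)"
  have \<delta>: "\<delta> > 0" unfolding \<delta>_def using \<tau> e sig_less[of 0 "\<tau>/2"] inv_less[of 0 "\<tau>/2"] by simp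
  obtain p where p: "p \<in> Rpl \<sigma> (x$i, x$j)" "0 < fst p" "fst p < \<delta>" "snd p < 0" "- snd p < \<delta>"
    using euclid[OF avoid _ _ \<delta>] xi xj by auto
  obtain m where m: "m \<in> monoid_gen {h_sig \<sigma>, v_sig \<sigma>}" "p = m (x$i, x$j)"
    using p(1) unfolding Rpl_def by auto
  obtain M where M: "M \<in> Msig \<sigma>" "\<forall>l. M x $ l = (if l = i then fst p else if l = j then snd p else x$l)"
    using lift[OF ij m(1), of x] m(2) by auto
  define y1 where "y1 = M x"
  have y1: "y1 \<in> orb \<sigma> x" unfolding y1_def by (rule orb_step[OF orb_self M(1)])
  have y1ij: "y1$i = fst p" "y1$j = snd p" using M(2) ij unfolding y1_def by auto
  have t2p: "\<tau>/2 > 0" using \<tau> by simp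
  have "\<bar>fst p\<bar> < min (\<sigma> (\<tau>/2)) (inv \<sigma> (\<tau>/2))" using p unfolding \<delta>_def by auto
  note sm1 = small_phi[OF t2p this]
  have "\<bar>snd p\<bar> < min (\<sigma> (\<tau>/2)) (inv \<sigma> (\<tau>/2))" using p unfolding \<delta>_def by auto
  note sm2 = small_phi[OF t2p this]
  have small: "\<bar>phi \<sigma> s t (y1$i)\<bar> < \<tau>/2" "\<bar>phi \<sigma> s t (y1$j)\<bar> < \<tau>/2" for s t
    using sm1 sm2 y1ij by auto
  define g where "g = (\<lambda>l. if l = k then cs else y$l)"
  obtain y2 where y2: "y2 \<in> orb \<sigma> x" "\<forall>l. l \<notin> UNIV - {i, j} \<longrightarrow> y2$l = y1$l"
      "\<forall>l\<in>UNIV - {i, j}. \<bar>y2$l - g l\<bar> \<le> \<tau>/2"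
  proof -
    have Bh: "\<forall>t. \<bar>phi \<sigma> i t (y1$i)\<bar> \<le> \<tau>/2 \<and> \<bar>phi \<sigma> j t (y1$j)\<bar> \<le> \<tau>/2"
      using small by (meson less_imp_le)
    have "i \<noteq> j" using ij by simp
    moreover have "y1$i > 0" "y1$j < 0" using y1ij p by auto
    moreover have "i \<notin> UNIV - {i,j}" "j \<notin> UNIV - {i,j}" by auto
    ultimately show ?thesis using multi_adjust[OF y1 _ _ _ Bh, of "UNIV - {i,j}" g] that by blast
  qed
  have y2ij: "y2$i = fst p" "y2$j = snd p" using y2(2) y1ij by auto
  have ji: "j \<noteq> i" using ij by simp
  obtain y3 where y3: "y3 \<in> orb \<sigma> x" "\<forall>l. l \<noteq> i \<longrightarrow> y3$l = y2$l" "\<bar>y3$i - y$i\<bar> \<le> \<bar>phi \<sigma> j i (y2$j)\<bar>"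
    using adjust[OF y2(1) ji, of "y$i"] y2ij p yi by (auto simp: zero_le_mult_iff)
  have y3i: "\<bar>y3$i - y$i\<bar> < \<tau>/2" using y3(3) small y2ij y1ij by (metis order.strict_trans1)
  have "k \<in> UNIV - {i, j}" using ki kj by simp
  then have "\<bar>y2$k - g k\<bar> \<le> \<tau>/2" using y2(3) by blast
  then have y3k: "\<bar>y3$k - cs\<bar> \<le> \<tau>/2" using y3(2) ki unfolding g_def by simp
  have y3o: "\<bar>y3$l - y$l\<bar> \<le> \<tau>/2" if "l \<noteq> i" "l \<noteq> j" "l \<noteq> k" for l
  proof -
    have "l \<in> UNIV - {i, j}" using that by simp
    then have "\<bar>y2$l - g l\<bar> \<le> \<tau>/2" using y2(3) by blast
    then show ?thesis using y3(2) that unfolding g_def by simp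
  qed
  have y3j: "y3$j = snd p" using y3(2) y2ij ji by auto
  define y4 where "y4 = ((E \<sigma> i j)^^K) (((E \<sigma> k j)^^N) y3)"
  have y4: "y4 \<in> orb \<sigma> x" unfolding y4_def
    by (intro orb_step[OF orb_step[OF y3(1)]] Msig_pow E_Msig) (use ij kj in auto)
  have ne: "i \<noteq> j" by (rule less_imp_neq[OF ij])
  have y4l: "y4$l = y3$l" if "l \<noteq> j" for l
    unfolding y4_def using E_pow_nth[OF ne] E_pow_nth[OF kj] that by simp
  have y4j: "y4$j = snd p + real N * phi \<sigma> k j (y3$k) + real K * \<sigma> (y3$i)"
  proof -
    have pij: "phi \<sigma> i j = \<sigma>" using ij by (simp add: phi_def)
    have "((E \<sigma> k j)^^N) y3 $ i = y3 $ i" using E_pow_nth[OF kj] ne by simp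
    then show ?thesis unfolding y4_def using E_pow_nth[OF ne] E_pow_nth[OF kj] y3j pij by simp
  qed
  have bound: "\<bar>y4$l - y$l\<bar> < e" for l
  proof -
    consider "l = j" | "l = i" | "l = k" | "l \<noteq> i" "l \<noteq> j" "l \<noteq> k" by blast
    then show ?thesis
    proof cases
      case 1
      define A where "A = phi \<sigma> k j (y3$k) - phi \<sigma> k j cs"
      define B where "B = \<sigma> (y3$i) - \<sigma> (y$i)"
      have a1: "\<bar>A\<bar> < e / (3 * N)" unfolding A_def using t1(2) y3k \<tau> by auto
      have a2: "\<bar>B\<bar> < e / (3 * (K + 1))" unfolding B_def using t2(2) y3i \<tau> by auto
      have eq: "y4$l - y$l = snd p + real N * A + real K * B"
        using 1 y4j ident unfolding v_def A_def B_def by (simp add: algebra_simps)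
      have "\<bar>snd p + real N * A + real K * B\<bar> \<le> \<bar>snd p\<bar> + \<bar>real N * A\<bar> + \<bar>real K * B\<bar>"
        by (rule order_trans[OF abs_triangle_ineq add_right_mono[OF abs_triangle_ineq]])
      moreover have "\<bar>real N * A\<bar> < e / 3"
      proof -
        have "\<bar>real N * A\<bar> = real N * \<bar>A\<bar>" by (simp add: abs_mult)
        also have "\<dots> < real N * (e / (3 * N))" using a1 Npos by (rule mult_strict_left_mono)
        also have "\<dots> = e / 3" using Npos by simp
        finally show ?thesis .
      qed
      moreover have "\<bar>real K * B\<bar> < e / 3"
      proof -
        have "\<bar>real K * B\<bar> = real K * \<bar>B\<bar>" by (simp add: abs_mult)
        also have "\<dots> \<le> real K * (e / (3 * (K + 1)))" using a2 by (intro mult_left_mono) auto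
        also have "\<dots> < e / 3" using e by (simp add: field_simps)
        finally show ?thesis .
      qed
      moreover have "\<bar>snd p\<bar> < e / 3" using p(4,5) unfolding \<delta>_def by auto
      ultimately show ?thesis using eq by linarith
    next
      case 2 then show ?thesis using y4l[of i] ne y3i \<tau> by auto
    next
      case 3
      have "y4$k = y3$k" using y4l[of k] kj by simp
      moreover have "\<bar>y3$k - y$k\<bar> \<le> \<bar>y3$k - cs\<bar> + \<bar>cs - y$k\<bar>"
        using abs_triangle_ineq[of "y3$k - cs" "cs - y$k"] by simp
      ultimately show ?thesis using 3 y3k cs_close \<tau> by simp
    next
      case 4 then show ?thesis using y4l[of l] y3o[of l] \<tau> by auto
    qed
  qed
  have "dist y4 y \<le> (\<Sum>l\<in>UNIV. \<bar>(y4 - y)$l\<bar>)" unfolding dist_norm by (rule norm_le_l1_cart)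
  also have "\<dots> < (\<Sum>l\<in>(UNIV::'n set). e)"
    by (rule sum_strict_mono) (use bound in auto)
  also have "\<dots> = \<epsilon>" unfolding e_def by simp
  finally show "\<exists>z\<in>orb \<sigma> x. dist z y < \<epsilon>" using y4 by blast
qed

end


context sig begin

lemma all_closure:
  fixes x y :: "real^'n::{finite,linorder}"
  assumes ij: "i < j" and ki: "k \<noteq> i" and kj: "k \<noteq> j"
    and xi: "x$i > 0" and xj: "x$j < 0"
    and avoid: "\<forall>p\<in>Rpl \<sigma> (x$i, x$j). fst p \<noteq> 0"
  shows "y \<in> closure (orb \<sigma> x)"
proof -
  have W: "z \<in> closure (orb \<sigma> x)" if "z$i < 0" "z$k > 0" for z :: "real^'n::{finite,linorder}"
    by (rule W_lemma[OF ij ki kj xi xj avoid that])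
  have ne: "i \<noteq> j" "j \<noteq> i" using ij by auto
  have ik: "i \<noteq> k" "k \<noteq> i" "j \<noteq> k" "k \<noteq> j" using ki kj by auto
  have pos: "z \<in> closure (orb \<sigma> x)" if zj: "z$j \<noteq> 0" for z :: "real^'n::{finite,linorder}"
  proof (cases "z$j < 0")
    case True
    have d: "- phi \<sigma> j k (z$j) > 0" using True by simp
    obtain K :: nat where K: "- z$k < real K * (- phi \<sigma> j k (z$j))"
      using ex_less_of_nat_mult[OF d] by blast
    define c where "c = z$k - real K * phi \<sigma> j k (z$j)"
    have c: "c > 0" using K unfolding c_def by (simp add: algebra_simps)
    have d2: "phi \<sigma> k i c > 0" using c by simp
    obtain N :: nat where N: "z$i < real N * phi \<sigma> k i c"
      using ex_less_of_nat_mult[OF d2] by blast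
    define a where "a = z$i - real N * phi \<sigma> k i c"
    have a: "a < 0" using N unfolding a_def by simp
    define w where "w = (\<chi> m. if m = i then a else if m = k then c else z$m)"
    have wc: "w \<in> closure (orb \<sigma> x)" by (rule W) (use a c ik in \<open>auto simp: w_def\<close>)
    define mm where "mm = ((E \<sigma> j k)^^K) \<circ> ((E \<sigma> k i)^^N)"
    have mm: "mm \<in> Msig \<sigma>" unfolding mm_def
      by (intro Msig_comp Msig_pow E_Msig) (use ik in auto)
    have zz: "((E \<sigma> k i)^^N) w $ l = (if l = i then z$i else w$l)" for l
      using E_pow_nth[OF ik(2)] by (simp add: w_def ik a_def)
    have "mm w = z"
      unfolding vec_eq_iff mm_def using E_pow_nth[OF ne(2)] E_pow_nth[OF ik(3)] zz ik
      by (auto simp: w_def c_def)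
    then show ?thesis using closure_orb_step[OF wc mm] by simp
  next
    case False
    then have zj': "z$j > 0" using zj by simp
    have d: "phi \<sigma> j i (z$j) > 0" using zj' by simp
    obtain N :: nat where N: "z$i < real N * phi \<sigma> j i (z$j)"
      using ex_less_of_nat_mult[OF d] by blast
    define a where "a = z$i - real N * phi \<sigma> j i (z$j)"
    have a: "a < 0" using N unfolding a_def by simp
    have d2: "- phi \<sigma> i k a > 0" using a by simp
    obtain K :: nat where K: "- z$k < real K * (- phi \<sigma> i k a)"
      using ex_less_of_nat_mult[OF d2] by blast
    define c where "c = z$k - real K * phi \<sigma> i k a"
    have c: "c > 0" using K unfolding c_def by (simp add: algebra_simps)
    define w where "w = (\<chi> m. if m = i then a else if m = k then c else z$m)"
    have wc: "w \<in> closure (orb \<sigma> x)" by (rule W) (use a c ik in \<open>auto simp: w_def\<close>)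
    define mm where "mm = ((E \<sigma> j i)^^N) \<circ> ((E \<sigma> i k)^^K)"
    have mm: "mm \<in> Msig \<sigma>" unfolding mm_def
      by (intro Msig_comp Msig_pow E_Msig) (use ik ne in auto)
    have zz: "((E \<sigma> i k)^^K) w $ l = (if l = k then z$k else w$l)" for l
      using E_pow_nth[OF ik(1)] by (simp add: w_def ik c_def)
    have "mm w = z"
      unfolding vec_eq_iff mm_def using E_pow_nth[OF ne(2)] zz ik ne
      by (auto simp: w_def a_def)
    then show ?thesis using closure_orb_step[OF wc mm] by simp
  qed
  show ?thesis
  proof (cases "y$j = 0")
    case False then show ?thesis using pos by blast
  next
    case True
    have "y \<in> closure (closure (orb \<sigma> x))"
      unfolding closure_approachable
    proof (intro allI impI)
      fix \<epsilon> :: real assume \<epsilon>: "\<epsilon> > 0"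
      define y' where "y' = (\<chi> m. if m = j then \<epsilon> / 2 else y$m)"
      have "y' \<in> closure (orb \<sigma> x)" by (rule pos) (use \<epsilon> in \<open>simp add: y'_def\<close>)
      moreover have "y' - y = (\<epsilon> / 2) *\<^sub>R axis j 1"
        unfolding vec_eq_iff using True by (auto simp: y'_def axis_def)
      then have "dist y' y = \<epsilon> / 2" using \<epsilon> by (simp add: dist_norm)
      ultimately show "\<exists>z\<in>closure (orb \<sigma> x). dist z y < \<epsilon>" using \<epsilon> by (intro bexI[of _ y']) auto
    qed
    then show ?thesis by simp
  qed
qed

lemma planar_odd: "m \<in> monoid_gen {h_sig \<sigma>, v_sig \<sigma>} \<Longrightarrow> m (- q) = - m q"
proof (induction arbitrary: q rule: monoid_gen.induct)
  case id_mem then show ?case by simp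
next
  case (comp_mem g m)
  have "g (- q) = - g q" for q
    using comp_mem(1) by (cases q) (auto simp: h_sig_def v_sig_def odd odd_inv)
  then show ?case using comp_mem by simp
qed

lemma avoid_neg:
  assumes "\<forall>p\<in>Rpl \<sigma> p0. fst p \<noteq> 0" shows "\<forall>p\<in>Rpl \<sigma> (- p0). fst p \<noteq> 0"
proof
  fix p assume "p \<in> Rpl \<sigma> (- p0)"
  then obtain m where m: "m \<in> monoid_gen {h_sig \<sigma>, v_sig \<sigma>}" "p = m (- p0)" unfolding Rpl_def by auto
  then have "p = - m p0" using planar_odd by simp
  moreover have "m p0 \<in> Rpl \<sigma> p0" using m unfolding Rpl_def by blast
  ultimately show "fst p \<noteq> 0" using assms by auto
qed

end


theorem theorem5:
  fixes \<sigma> :: "real \<Rightarrow> real" and x :: "real^'n::{finite,linorder}" and i j :: 'n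
  assumes "CARD('n) \<ge> 3"
    and "strict_mono \<sigma>"
    and "\<forall>t. \<sigma> (- t) = - \<sigma> t"
    and "\<exists>g. homeomorphism UNIV UNIV \<sigma> g"
    and "i < j"
    and "x $ i * x $ j < 0"
    and "sigma_irrational \<sigma> (x $ i, x $ j)"
  shows "closure ((\<lambda>m. m x) ` Msig \<sigma>) = UNIV"
proof -
  interpret sig \<sigma> using assms(2,3,4) by unfold_locales
  obtain k where k: "k \<noteq> i" "k \<noteq> j"
  proof -
    have "\<not> (UNIV::'n set) \<subseteq> {i, j}"
    proof
      assume "(UNIV::'n set) \<subseteq> {i, j}"
      then have "CARD('n) \<le> card {i, j}" by (intro card_mono) auto
      also have "\<dots> \<le> 2" by (simp add: card_insert_le_m1)
      finally show False using assms(1) by simp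
    qed
    then show ?thesis using that by blast
  qed
  have avoid: "\<forall>p\<in>Rpl \<sigma> (x$i, x$j). fst p \<noteq> 0" using irr_avoid[OF assms(7)] by blast
  have all: "y \<in> closure (orb \<sigma> x)" for y
  proof (cases "x$i > 0")
    case True
    then have "x$j < 0" using assms(6) by (simp add: mult_less_0_iff)
    then show ?thesis using all_closure[OF assms(5) k True _ avoid] by blast
  next
    case False
    then have xi: "x$i < 0" and xj: "x$j > 0" using assms(6) by (auto simp: mult_less_0_iff)
    have avoid': "\<forall>p\<in>Rpl \<sigma> ((- x)$i, (- x)$j). fst p \<noteq> 0"
      using avoid_neg[OF avoid] by simp
    have c: "- y \<in> closure (orb \<sigma> (- x))"
      by (rule all_closure[OF assms(5) k _ _ avoid']) (use xi xj in auto)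
    show ?thesis
      unfolding closure_approachable
    proof (intro allI impI)
      fix \<epsilon> :: real assume "\<epsilon> > 0"
      then obtain o' where o': "o' \<in> orb \<sigma> (- x)" "dist o' (- y) < \<epsilon>"
        using c unfolding closure_approachable by blast
      then obtain m where m: "m \<in> Msig \<sigma>" "o' = m (- x)" unfolding orb_def by auto
      then have "o' = - m x" using Msig_neg by simp
      then have "dist (m x) y < \<epsilon>" using o'(2) dist_minus[of "m x" y] by simp
      moreover have "m x \<in> orb \<sigma> x" using m unfolding orb_def by blast
      ultimately show "\<exists>z\<in>orb \<sigma> x. dist z y < \<epsilon>" by blast
    qed
  qed
  then show ?thesis unfolding orb_def by auto
qed


end
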